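(* Let $R$ be a generalized reductive root system in $\mathcal V$ and let $R_1\subseteq R$ with $R_1^\times:=R_1\cap R^\times\ne\emptyset$. Suppose that (a) $R_1=-R_1$; (b) $\{\delta\in R^0:\alpha'+\delta\in R_1\text{ for some }\alpha'\in R_1^\times\}\subseteq R_1$; (c) if $\alpha'\in R_1$, $\beta\in R$ and $(\alpha',\beta)\ne0$, then $\beta\in R_1$. Then $R_1$ is a generalized reductive root system in its real span (with the restricted form). Moreover, $R_1'=R_1^\times\cup(\langle R_1\rangle\cap R^0)$ is also a generalized reductive root system in the real span of $R_1$.
   Context: Let $\mathcal V$ be a nontrivial finite-dimensional real vector space with a nontrivial positive semidefinite symmetric bilinear form $(\cdot,\cdot)$. For $R\subseteq\mathcal V$ let $R^\times=\{\alpha\in R:(\alpha,\alpha)\ne0\}$, $R^0=\{\alpha\in R:(\alpha,\alpha)=0\}$, and $(\beta,\alpha^\vee)=2(\beta,\alpha)/(\alpha,\alpha)$. $R$ is a generalized reductive root system in $\mathcal V$ if: (R1) $R=-R$; (R2) $R$ spans $\mathcal V$; (R3) $R$ is discrete in $\mathcal V$; (R4) for $\alpha\in R^\times$ and $\beta\in R$ there are nonnegative integers $u,d$ such that for $n\in\mathbb Z$, $\beta+n\alpha\in R$ iff $-d\le n\le u$, and $d-u=(\beta,\alpha^\vee)$; (R5) $\alpha\in R^\times\Rightarrow2\alpha\notin R$. $\langle S\rangle$ denotes the $\mathbb Z$-span of $S$. *)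

theory Defs
  imports "HOL-Analysis.Analysis"
begin

text \<open>The real vector space V is modelled as a linear subspace of a finite-dimensional
real inner-product type 'a (euclidean_space); the form B is a real bilinear map on 'a
whose restriction to V is the symmetric positive semidefinite form of the paper.\<close>

definition nonisotropic :: "('a \<Rightarrow> 'a \<Rightarrow> real) \<Rightarrow> 'a set \<Rightarrow> 'a set" where
  "nonisotropic B R = {a \<in> R. B a a \<noteq> 0}"

definition isotropic :: "('a \<Rightarrow> 'a \<Rightarrow> real) \<Rightarrow> 'a set \<Rightarrow> 'a set" where
  "isotropic B R = {a \<in> R. B a a = 0}"

definition coroot_pair :: "('a \<Rightarrow> 'a \<Rightarrow> real) \<Rightarrow> 'a \<Rightarrow> 'a \<Rightarrow> real" where
  "coroot_pair B b a = 2 * B b a / B a a"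

definition zspan :: "'a::real_vector set \<Rightarrow> 'a set" where
  "zspan S = {\<Sum>s\<in>F. of_int (c s) *\<^sub>R s | F c. finite F \<and> F \<subseteq> S}"

definition form_space :: "('a::euclidean_space \<Rightarrow> 'a \<Rightarrow> real) \<Rightarrow> 'a set \<Rightarrow> bool" where
  "form_space B V \<longleftrightarrow> subspace V \<and> V \<noteq> {0} \<and> bilinear B
     \<and> (\<forall>x\<in>V. \<forall>y\<in>V. B x y = B y x)
     \<and> (\<forall>x\<in>V. B x x \<ge> 0)
     \<and> (\<exists>x\<in>V. \<exists>y\<in>V. B x y \<noteq> 0)"

definition gen_red_root_system ::
  "('a::euclidean_space \<Rightarrow> 'a \<Rightarrow> real) \<Rightarrow> 'a set \<Rightarrow> 'a set \<Rightarrow> bool" where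
  "gen_red_root_system B V R \<longleftrightarrow>
     form_space B V \<and> R \<subseteq> V
     \<and> (\<forall>a\<in>R. - a \<in> R)
     \<and> span R = V
     \<and> (\<forall>a\<in>R. \<exists>e>0. \<forall>b\<in>R. dist b a < e \<longrightarrow> b = a)
     \<and> (\<forall>a\<in>nonisotropic B R. \<forall>b\<in>R. \<exists>u d :: nat.
           (\<forall>n::int. b + of_int n *\<^sub>R a \<in> R \<longleftrightarrow> - int d \<le> n \<and> n \<le> int u)
           \<and> real_of_int (int d - int u) = coroot_pair B b a)
     \<and> (\<forall>a\<in>nonisotropic B R. 2 *\<^sub>R a \<notin> R)"

end

theory Submission
  imports Defs
begin

lemma string_nat:
  fixes B :: "'a::euclidean_space \<Rightarrow> 'a \<Rightarrow> real"
  assumes bil: "bilinear B"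
    and sub: "R1 \<subseteq> R"
    and a: "\<forall>x\<in>R1. - x \<in> R1"
    and b: "{\<delta> \<in> isotropic B R. \<exists>a'\<in>R1 \<inter> nonisotropic B R. a' + \<delta> \<in> R1} \<subseteq> R1"
    and c: "\<forall>a'\<in>R1. \<forall>\<beta>\<in>R. B a' \<beta> \<noteq> 0 \<longrightarrow> \<beta> \<in> R1"
    and aR1: "x \<in> R1" and aa: "B x x \<noteq> 0" and bR1: "y \<in> R1"
  shows "(\<forall>k\<le>m. y + real k *\<^sub>R x \<in> R) \<Longrightarrow> y + real m *\<^sub>R x \<in> R1"
proof (induction m)
  case 0
  then show ?case using bR1 by simp
next
  case (Suc m)
  define z where "z = y + real m *\<^sub>R x"
  define w where "w = y + real (Suc m) *\<^sub>R x"
  have zR1: "z \<in> R1" using Suc unfolding z_def by simp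
  have wR: "w \<in> R" using Suc.prems unfolding w_def by blast
  have wz: "w = z + x" unfolding w_def z_def by (simp add: algebra_simps)
  have Bww: "B w w = B z w + B x w" using wz bilinear_ladd[OF bil] by simp
  show ?case
  proof (cases "B x w \<noteq> 0")
    case True
    then show ?thesis using c aR1 wR unfolding w_def by blast
  next
    case False
    show ?thesis
    proof (cases "B w w \<noteq> 0")
      case True
      then have "B z w \<noteq> 0" using Bww False by simp
      then show ?thesis using c zR1 wR unfolding w_def by blast
    next
      case F2: False
      have "- x \<in> R1" using a aR1 by blast
      moreover have "B (-x) (-x) \<noteq> 0" using aa bilinear_lneg[OF bil] bilinear_rneg[OF bil] by simp
      moreover have "- x + w \<in> R1" using zR1 wz by simp
      ultimately have "w \<in> {\<delta> \<in> isotropic B R. \<exists>a'\<in>R1 \<inter> nonisotropic B R. a' + \<delta> \<in> R1}"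
        using F2 wR sub unfolding isotropic_def nonisotropic_def by blast
      then show ?thesis using b unfolding w_def by blast
    qed
  qed
qed

lemma string_int:
  fixes B :: "'a::euclidean_space \<Rightarrow> 'a \<Rightarrow> real"
  assumes bil: "bilinear B"
    and sub: "R1 \<subseteq> R"
    and a: "\<forall>x\<in>R1. - x \<in> R1"
    and b: "{\<delta> \<in> isotropic B R. \<exists>a'\<in>R1 \<inter> nonisotropic B R. a' + \<delta> \<in> R1} \<subseteq> R1"
    and c: "\<forall>a'\<in>R1. \<forall>\<beta>\<in>R. B a' \<beta> \<noteq> 0 \<longrightarrow> \<beta> \<in> R1"
    and aR1: "x \<in> R1" and aa: "B x x \<noteq> 0" and bR1: "y \<in> R1"
    and str: "\<forall>n::int. y + of_int n *\<^sub>R x \<in> R \<longleftrightarrow> - int d \<le> n \<and> n \<le> int u"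
    and rng: "- int d \<le> n" "n \<le> int u"
  shows "y + of_int n *\<^sub>R x \<in> R1"
proof (cases "n \<ge> 0")
  case True
  have "\<forall>k\<le>nat n. y + real k *\<^sub>R x \<in> R"
  proof (intro allI impI)
    fix k assume "k \<le> nat n"
    then have "- int d \<le> int k \<and> int k \<le> int u" using rng True by linarith
    then show "y + real k *\<^sub>R x \<in> R" using str[rule_format, of "int k"] by simp
  qed
  from string_nat[OF bil sub a b c aR1 aa bR1 this] show ?thesis using True by simp
next
  case False
  have mx: "- x \<in> R1" using a aR1 by blast
  have mxx: "B (-x) (-x) \<noteq> 0" using aa bilinear_lneg[OF bil] bilinear_rneg[OF bil] by simp
  have "\<forall>k\<le>nat (-n). y + real k *\<^sub>R (-x) \<in> R"
  proof (intro allI impI)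
    fix k assume "k \<le> nat (-n)"
    then have "- int d \<le> - int k \<and> - int k \<le> int u" using rng False by linarith
    then show "y + real k *\<^sub>R (-x) \<in> R" using str[rule_format, of "- int k"] by simp
  qed
  from string_nat[OF bil sub a b c mx mxx bR1 this] show ?thesis using False by simp
qed

lemma zspan_base: "x \<in> S \<Longrightarrow> x \<in> zspan S"
  unfolding zspan_def
  by (rule CollectI, rule exI[of _ "{x}"], rule exI[of _ "\<lambda>_. 1"]) simp

lemma zspan_neg: "x \<in> zspan S \<Longrightarrow> - x \<in> zspan S"
proof -
  assume "x \<in> zspan S"
  then obtain F c where F: "finite F" "F \<subseteq> S" "x = (\<Sum>s\<in>F. of_int (c s) *\<^sub>R s)"
    unfolding zspan_def by blast
  then have "- x = (\<Sum>s\<in>F. of_int (- c s) *\<^sub>R s)" by (simp add: sum_negf)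
  then show ?thesis using F(1,2) unfolding zspan_def
    by (intro CollectI exI[of _ "F"] exI[of _ "\<lambda>s. - c s"]) simp
qed

lemma zspan_add: "x \<in> zspan S \<Longrightarrow> y \<in> zspan S \<Longrightarrow> x + y \<in> zspan S"
proof -
  assume "x \<in> zspan S" "y \<in> zspan S"
  then obtain F c G d where F: "finite F" "F \<subseteq> S" "x = (\<Sum>s\<in>F. of_int (c s) *\<^sub>R s)"
    and G: "finite G" "G \<subseteq> S" "y = (\<Sum>s\<in>G. of_int (d s) *\<^sub>R s)"
    unfolding zspan_def by blast
  define c' where "c' s = (if s \<in> F then c s else 0)" for s
  define d' where "d' s = (if s \<in> G then d s else 0)" for s
  have x: "x = (\<Sum>s\<in>F \<union> G. of_int (c' s) *\<^sub>R s)"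
    unfolding F(3) c'_def
    by (rule sum.mono_neutral_cong_left) (use F G in auto)
  have y: "y = (\<Sum>s\<in>F \<union> G. of_int (d' s) *\<^sub>R s)"
    unfolding G(3) d'_def
    by (rule sum.mono_neutral_cong_left) (use F G in auto)
  have "x + y = (\<Sum>s\<in>F \<union> G. of_int (c' s + d' s) *\<^sub>R s)"
    unfolding x y by (simp add: sum.distrib scaleR_add_left)
  then show ?thesis using F(1,2) G(1,2) unfolding zspan_def
    by (intro CollectI exI[of _ "F \<union> G"] exI[of _ "\<lambda>s. c' s + d' s"]) simp
qed

lemma zspan_smult: "x \<in> S \<Longrightarrow> of_int n *\<^sub>R x \<in> zspan S"
  unfolding zspan_def
  by (rule CollectI, rule exI[of _ "{x}"], rule exI[of _ "\<lambda>_. n"]) simp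

lemma zspan_span: "zspan S \<subseteq> span S"
  unfolding zspan_def
  apply clarify
  apply (rule span_sum)
  apply (rule span_scale)
  apply (rule span_base)
  by blast

theorem lemma2p1:
  fixes B :: "'a::euclidean_space \<Rightarrow> 'a \<Rightarrow> real"
    and V R R1 :: "'a set"
  assumes R: "gen_red_root_system B V R"
    and sub: "R1 \<subseteq> R"
    and ne: "R1 \<inter> nonisotropic B R \<noteq> {}"
    and a: "\<forall>x\<in>R1. - x \<in> R1"
    and b: "{\<delta> \<in> isotropic B R. \<exists>a'\<in>R1 \<inter> nonisotropic B R. a' + \<delta> \<in> R1} \<subseteq> R1"
    and c: "\<forall>a'\<in>R1. \<forall>\<beta>\<in>R. B a' \<beta> \<noteq> 0 \<longrightarrow> \<beta> \<in> R1"
  shows "gen_red_root_system B (span R1) R1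
       \<and> gen_red_root_system B (span R1)
           ((R1 \<inter> nonisotropic B R) \<union> (zspan R1 \<inter> isotropic B R))"
proof -
  have fs: "form_space B V" and RV: "R \<subseteq> V" and negR: "\<forall>a\<in>R. - a \<in> R"
    and spR: "span R = V" and disc: "\<forall>a\<in>R. \<exists>e>0. \<forall>b\<in>R. dist b a < e \<longrightarrow> b = a"
    and R4: "\<forall>a\<in>nonisotropic B R. \<forall>b\<in>R. \<exists>u d :: nat.
           (\<forall>n::int. b + of_int n *\<^sub>R a \<in> R \<longleftrightarrow> - int d \<le> n \<and> n \<le> int u)
           \<and> real_of_int (int d - int u) = coroot_pair B b a"
    and R5: "\<forall>a\<in>nonisotropic B R. 2 *\<^sub>R a \<notin> R"
    using R unfolding gen_red_root_system_def by blast+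
  have subV: "subspace V" and bil: "bilinear B" and sym: "\<forall>x\<in>V. \<forall>y\<in>V. B x y = B y x"
    and psd: "\<forall>x\<in>V. B x x \<ge> 0"
    using fs unfolding form_space_def by blast+
  have spV: "span R1 \<subseteq> V" using sub spR span_mono by blast
  obtain a0 where a0: "a0 \<in> R1" "B a0 a0 \<noteq> 0" using ne unfolding nonisotropic_def by blast
  have "a0 \<noteq> 0" using a0 bilinear_lzero[OF bil] by auto
  then have "span R1 \<noteq> {0}" using a0 span_base by blast
  then have fsp: "form_space B (span R1)"
    unfolding form_space_def using subspace_span bil sym psd spV a0 span_base
    by (metis (no_types, lifting) subsetD)
  have discsub: "\<And>S. S \<subseteq> R \<Longrightarrow> \<forall>a\<in>S. \<exists>e>0. \<forall>b\<in>S. dist b a < e \<longrightarrow> b = a"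
    using disc by (meson subsetD)
  have strR1: "\<exists>u d :: nat.
           (\<forall>n::int. y + of_int n *\<^sub>R x \<in> R1 \<longleftrightarrow> - int d \<le> n \<and> n \<le> int u)
           \<and> real_of_int (int d - int u) = coroot_pair B y x"
    if x: "x \<in> R1" "B x x \<noteq> 0" and y: "y \<in> R1" for x y
  proof -
    have "x \<in> nonisotropic B R" using x sub unfolding nonisotropic_def by blast
    then obtain u d :: nat where ud: "\<forall>n::int. y + of_int n *\<^sub>R x \<in> R \<longleftrightarrow> - int d \<le> n \<and> n \<le> int u"
      "real_of_int (int d - int u) = coroot_pair B y x"
      using R4 y sub by blast
    have "\<forall>n::int. y + of_int n *\<^sub>R x \<in> R1 \<longleftrightarrow> - int d \<le> n \<and> n \<le> int u"
    proof (intro allI iffI)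
      fix n :: int assume "y + of_int n *\<^sub>R x \<in> R1"
      then show "- int d \<le> n \<and> n \<le> int u" using ud sub by blast
    next
      fix n :: int assume "- int d \<le> n \<and> n \<le> int u"
      then show "y + of_int n *\<^sub>R x \<in> R1"
        using string_int[OF bil sub a b c x y ud(1)] by blast
    qed
    then show ?thesis using ud(2) by blast
  qed
  have part1: "gen_red_root_system B (span R1) R1"
    unfolding gen_red_root_system_def
  proof (intro conjI)
    show "\<forall>a\<in>nonisotropic B R1. \<forall>b\<in>R1. \<exists>u d :: nat.
           (\<forall>n::int. b + of_int n *\<^sub>R a \<in> R1 \<longleftrightarrow> - int d \<le> n \<and> n \<le> int u)
           \<and> real_of_int (int d - int u) = coroot_pair B b a"
      using strR1 unfolding nonisotropic_def by blast
    show "\<forall>a\<in>nonisotropic B R1. 2 *\<^sub>R a \<notin> R1"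
      using R5 sub unfolding nonisotropic_def by blast
  qed (use fsp span_superset a discsub[OF sub] in auto)
  define R1' where "R1' = (R1 \<inter> nonisotropic B R) \<union> (zspan R1 \<inter> isotropic B R)"
  have R1'R: "R1' \<subseteq> R" unfolding R1'_def nonisotropic_def isotropic_def by blast
  have R1R1': "R1 \<subseteq> R1'" unfolding R1'_def nonisotropic_def isotropic_def
    using sub zspan_base by blast
  have R1'sp: "R1' \<subseteq> span R1" unfolding R1'_def using zspan_span span_superset by blast
  have spaneq: "span R1' = span R1"
    using R1R1' R1'sp by (metis span_mono span_span subset_antisym)
  have nonR1': "nonisotropic B R1' = R1 \<inter> nonisotropic B R"
    unfolding R1'_def nonisotropic_def isotropic_def by blast
  have negR1': "\<forall>x\<in>R1'. - x \<in> R1'"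
  proof
    fix x assume "x \<in> R1'"
    moreover have "B (-x) (-x) = B x x" using bilinear_lneg[OF bil] bilinear_rneg[OF bil] by simp
    ultimately show "- x \<in> R1'" using a negR zspan_neg unfolding R1'_def nonisotropic_def isotropic_def
      by auto
  qed
  have strR1': "\<exists>u d :: nat.
           (\<forall>n::int. y + of_int n *\<^sub>R x \<in> R1' \<longleftrightarrow> - int d \<le> n \<and> n \<le> int u)
           \<and> real_of_int (int d - int u) = coroot_pair B y x"
    if x: "x \<in> R1" "B x x \<noteq> 0" and y: "y \<in> R1'" for x y
  proof -
    have xn: "x \<in> nonisotropic B R" using x sub unfolding nonisotropic_def by blast
    then obtain u d :: nat where ud: "\<forall>n::int. y + of_int n *\<^sub>R x \<in> R \<longleftrightarrow> - int d \<le> n \<and> n \<le> int u"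
      "real_of_int (int d - int u) = coroot_pair B y x"
      using R4 y R1'R by blast
    have yz: "y \<in> zspan R1" using y zspan_base unfolding R1'_def by blast
    have "\<forall>n::int. y + of_int n *\<^sub>R x \<in> R1' \<longleftrightarrow> - int d \<le> n \<and> n \<le> int u"
    proof (intro allI iffI)
      fix n :: int assume "y + of_int n *\<^sub>R x \<in> R1'"
      then show "- int d \<le> n \<and> n \<le> int u" using ud R1'R by blast
    next
      fix n :: int assume rng: "- int d \<le> n \<and> n \<le> int u"
      define w where "w = y + of_int n *\<^sub>R x"
      have wR: "w \<in> R" using ud(1) rng unfolding w_def by blast
      show "y + of_int n *\<^sub>R x \<in> R1'"
      proof (cases "B w w = 0")
        case True
        have "w \<in> zspan R1" unfolding w_def using zspan_add[OF yz zspan_smult[OF x(1)]] .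
        then show ?thesis using True wR unfolding w_def R1'_def isotropic_def by blast
      next
        case False
        show ?thesis
        proof (cases "y \<in> R1")
          case True
          then have "w \<in> R1" using string_int[OF bil sub a b c x True ud(1)] rng unfolding w_def by blast
          then show ?thesis using False R1R1' unfolding w_def by blast
        next
          case yn: False
          have yiso: "B y y = 0" "y \<in> R" using y yn unfolding R1'_def isotropic_def nonisotropic_def by auto
          show ?thesis
          proof (cases "B x w = 0")
            case False
            then have "w \<in> R1" using c x wR by blast
            then show ?thesis using R1R1' unfolding w_def by blast
          next
            case True
            have xV: "x \<in> V" and yV: "y \<in> V" and wV: "w \<in> V" using x sub yiso wR RV by auto
            have e1: "B w w = B y w + of_int n * B x w"
              unfolding w_def using bilinear_ladd[OF bil] bilinear_lmul[OF bil] by simp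
            have e2: "B y w = B y y + of_int n * B y x"
              unfolding w_def using bilinear_radd[OF bil] bilinear_rmul[OF bil] by simp
            have e3: "B x w = B x y + of_int n * B x x"
              unfolding w_def using bilinear_radd[OF bil] bilinear_rmul[OF bil] by simp
            have e4: "B y x = B x y" using sym xV yV by blast
            have pos: "B x x > 0" using psd xV x(2) by force
            have f1: "B x y = - (real_of_int n * B x x)" using e3 True by linarith
            have f2: "B w w = B y w" using e1 True by simp
            have "B w w = - (real_of_int n * real_of_int n * B x x)" using f2 e2 e4 f1 yiso(1)
              by simp
            moreover have "B w w \<ge> 0" using psd wV by blast
            ultimately have "B w w = 0" using pos
              by (smt (verit) mult_nonneg_nonneg zero_le_square)
            then show ?thesis using False by simp
          qed
        qed
      qed
    qed
    then show ?thesis using ud(2) by blast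
  qed
  have part2: "gen_red_root_system B (span R1) R1'"
    unfolding gen_red_root_system_def
  proof (intro conjI)
    show "\<forall>a\<in>nonisotropic B R1'. \<forall>b\<in>R1'. \<exists>u d :: nat.
           (\<forall>n::int. b + of_int n *\<^sub>R a \<in> R1' \<longleftrightarrow> - int d \<le> n \<and> n \<le> int u)
           \<and> real_of_int (int d - int u) = coroot_pair B b a"
      unfolding nonR1'
    proof (intro ballI)
      fix x y assume "x \<in> R1 \<inter> nonisotropic B R" "y \<in> R1'"
      then show "\<exists>u d :: nat.
           (\<forall>n::int. y + of_int n *\<^sub>R x \<in> R1' \<longleftrightarrow> - int d \<le> n \<and> n \<le> int u)
           \<and> real_of_int (int d - int u) = coroot_pair B y x"
        using strR1' unfolding nonisotropic_def by blast
    qed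
    show "\<forall>a\<in>nonisotropic B R1'. 2 *\<^sub>R a \<notin> R1'"
      using R5 R1'R unfolding nonR1' by blast
  qed (use fsp R1'sp spaneq negR1' discsub[OF R1'R] in auto)
  show ?thesis using part1 part2 unfolding R1'_def by blast
qed

end
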